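(* Suppose $\mu(f)<0$ and for some $\delta\in(0,1]$ and every $x\in E$ \[\bar{\gamma}(x)=\sup_{\tau} \liminf_{T \to \infty} \mathbb{E}^x \Big\{(1-\delta)\mu(f)(\tau \wedge T)-q(X_{\tau \wedge T}) \Big\} < \infty,\] where the supremum is over stopping times $\tau$. Then for every $x\in E$, with $d(x)=\delta\mu(f)<0$, \[ \gamma (x) = \sup_{\tau} \liminf_{T \to \infty} \mathbb{E}^x \Big\{ \int_0^{\tau \wedge T} \big(f(X_s) - d(x)\big) ds \Big\} < \infty. \]
   Context: Let $(X_t)$ be a Feller–Markov process on $(\Omega,F,(F_t))$ with values in a locally compact metric space $E$ with Borel $\sigma$-field, with laws $\mathbb{P}^x$ and expectations $\mathbb{E}^x$ when started at $x$, and transition semigroup $P_t$. Assume (A1) weak Feller property: $P_t\,\mathcal{C}_0\subseteq\mathcal{C}_0$, where $\mathcal{C}_0$ is the space of continuous bounded functions on $E$ vanishing at infinity; and (A2): there is a unique probability measure $\mu$ on $E$, a function $K:E\to(0,\infty)$ bounded on compacts and $h:[0,\infty)\to\mathbb{R}_+$ with $\int_0^\infty h(t)dt<\infty$ such that $\|P_t(x,\cdot)-\mu(\cdot)\|_{TV}\le K(x)h(t)$ for all $x$, and $\mathbb{E}^x\{K(X_T)\}<\infty$ for each $T\ge0$. Let $f$ be a continuous bounded function, $\mu(f)=\int_E f\,d\mu$, and let $q(x)=\mathbb{E}^x\{\int_0^\infty (f(X_t)-\mu(f))dt\}$ be the centred zero-potential of $f$; under (A1)–(A2), $q$ is continuous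 and for any bounded stopping time $\tau$, $q(x)=\mathbb{E}^x\{\int_0^\tau(f(X_t)-\mu(f))dt+q(X_\tau)\}$. *)

theory Defs
  imports "HOL-Probability.Probability"
begin

definition C0 :: "('e::metric_space \<Rightarrow> real) \<Rightarrow> bool" where
  "C0 g \<longleftrightarrow> continuous_on UNIV g \<and> bounded (range g) \<and>
     (\<forall>e>0. \<exists>K. compact K \<and> (\<forall>y. y \<notin> K \<longrightarrow> \<bar>g y\<bar> < e))"

definition tv_dist :: "'e::metric_space measure \<Rightarrow> 'e measure \<Rightarrow> real" where
  "tv_dist p q = (SUP A \<in> sets borel. \<bar>measure p A - measure q A\<bar>)"

definition markov_process ::
  "'w measure \<Rightarrow> (real \<Rightarrow> 'w measure) \<Rightarrow> ('e::metric_space \<Rightarrow> 'w measure) \<Rightarrow> (real \<Rightarrow> 'w \<Rightarrow> 'e) \<Rightarrow> bool"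
where
  "markov_process M F Px X \<longleftrightarrow>
     (\<forall>t. space (F t) = space M \<and> sets (F t) \<subseteq> sets M) \<and>
     (\<forall>s t. s \<le> t \<longrightarrow> sets (F s) \<subseteq> sets (F t)) \<and>
     (\<forall>x. prob_space (Px x) \<and> sets (Px x) = sets M) \<and>
     (\<forall>t\<ge>0. X t \<in> F t \<rightarrow>\<^sub>M borel) \<and>
     ((\<lambda>(t, \<omega>). X t \<omega>) \<in> (lborel \<Otimes>\<^sub>M M) \<rightarrow>\<^sub>M borel) \<and>
     (\<forall>\<omega>\<in>space M. \<forall>t\<ge>0. continuous (at_right t) (\<lambda>s. X s \<omega>)) \<and>
     (\<forall>x. AE \<omega> in Px x. X 0 \<omega> = x) \<and>
     (\<forall>x s t A (g::'e \<Rightarrow> real). 0 \<le> s \<longrightarrow> 0 \<le> t \<longrightarrow> A \<in> sets (F t) \<longrightarrow>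
        g \<in> borel_measurable borel \<longrightarrow> bounded (range g) \<longrightarrow>
        (\<integral>\<omega>. indicator A \<omega> * g (X (t + s) \<omega>) \<partial>Px x) =
        (\<integral>\<omega>. indicator A \<omega> * (\<integral>\<omega>'. g (X s \<omega>') \<partial>Px (X t \<omega>)) \<partial>Px x))"

definition trans :: "('e \<Rightarrow> 'w measure) \<Rightarrow> (real \<Rightarrow> 'w \<Rightarrow> 'e::metric_space) \<Rightarrow> real \<Rightarrow> 'e \<Rightarrow> 'e measure" where
  "trans Px X t x = distr (Px x) borel (X t)"

definition weak_feller :: "('e::metric_space \<Rightarrow> 'w measure) \<Rightarrow> (real \<Rightarrow> 'w \<Rightarrow> 'e) \<Rightarrow> bool" where
  "weak_feller Px X \<longleftrightarrow> (\<forall>t\<ge>0. \<forall>g. C0 g \<longrightarrow> C0 (\<lambda>x. \<integral>y. g y \<partial>trans Px X t x))"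

definition ergodic_bound ::
  "('e::metric_space \<Rightarrow> 'w measure) \<Rightarrow> (real \<Rightarrow> 'w \<Rightarrow> 'e) \<Rightarrow> 'e measure \<Rightarrow> ('e \<Rightarrow> real) \<Rightarrow> (real \<Rightarrow> real) \<Rightarrow> bool"
where
  "ergodic_bound Px X \<mu> K h \<longleftrightarrow>
     prob_space \<mu> \<and> sets \<mu> = sets borel \<and>
     (\<forall>x. 0 < K x) \<and> (\<forall>C. compact C \<longrightarrow> bounded (K ` C)) \<and>
     (\<forall>t. 0 \<le> h t) \<and> set_integrable lborel {0..} h \<and>
     (\<forall>x t. 0 \<le> t \<longrightarrow> tv_dist (trans Px X t x) \<mu> \<le> K x * h t) \<and>
     (\<forall>x T. 0 \<le> T \<longrightarrow> (\<integral>\<^sup>+\<omega>. ennreal (K (X T \<omega>)) \<partial>Px x) < \<infinity>)"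

definition stopping_time_R :: "'w measure \<Rightarrow> (real \<Rightarrow> 'w measure) \<Rightarrow> ('w \<Rightarrow> ereal) \<Rightarrow> bool" where
  "stopping_time_R M F \<tau> \<longleftrightarrow> (\<forall>\<omega>\<in>space M. 0 \<le> \<tau> \<omega>) \<and>
     (\<forall>t\<ge>0. Measurable.pred (F t) (\<lambda>\<omega>. \<tau> \<omega> \<le> ereal t))"

definition bounded_stopping_time :: "'w measure \<Rightarrow> (real \<Rightarrow> 'w measure) \<Rightarrow> ('w \<Rightarrow> ereal) \<Rightarrow> bool" where
  "bounded_stopping_time M F \<tau> \<longleftrightarrow> stopping_time_R M F \<tau> \<and> (\<exists>c::real. \<forall>\<omega>\<in>space M. \<tau> \<omega> \<le> ereal c)"

definition stopped :: "('w \<Rightarrow> ereal) \<Rightarrow> real \<Rightarrow> 'w \<Rightarrow> real" where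
  "stopped \<tau> T \<omega> = real_of_ereal (min (\<tau> \<omega>) (ereal T))"

definition zero_potential ::
  "('e::metric_space \<Rightarrow> 'w measure) \<Rightarrow> (real \<Rightarrow> 'w \<Rightarrow> 'e) \<Rightarrow> 'e measure \<Rightarrow> ('e \<Rightarrow> real) \<Rightarrow> 'e \<Rightarrow> real"
where
  "zero_potential Px X \<mu> f x = (LBINT t:{0..}. (\<integral>\<omega>. f (X t \<omega>) \<partial>Px x) - integral\<^sup>L \<mu> f)"

definition gamma_bar ::
  "'w measure \<Rightarrow> (real \<Rightarrow> 'w measure) \<Rightarrow> ('e::metric_space \<Rightarrow> 'w measure) \<Rightarrow> (real \<Rightarrow> 'w \<Rightarrow> 'e) \<Rightarrow>
   'e measure \<Rightarrow> ('e \<Rightarrow> real) \<Rightarrow> real \<Rightarrow> 'e \<Rightarrow> ereal"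
where
  "gamma_bar M F Px X \<mu> f \<delta> x =
     (SUP \<tau> \<in> {\<tau>. stopping_time_R M F \<tau>}. Liminf at_top (\<lambda>T::real. ereal
        (\<integral>\<omega>. (1 - \<delta>) * integral\<^sup>L \<mu> f * stopped \<tau> T \<omega>
              - zero_potential Px X \<mu> f (X (stopped \<tau> T \<omega>) \<omega>) \<partial>Px x)))"

definition gamma ::
  "'w measure \<Rightarrow> (real \<Rightarrow> 'w measure) \<Rightarrow> ('e::metric_space \<Rightarrow> 'w measure) \<Rightarrow> (real \<Rightarrow> 'w \<Rightarrow> 'e) \<Rightarrow>
   ('e \<Rightarrow> real) \<Rightarrow> ('e \<Rightarrow> real) \<Rightarrow> 'e \<Rightarrow> ereal"
where
  "gamma M F Px X f d x =
     (SUP \<tau> \<in> {\<tau>. stopping_time_R M F \<tau>}. Liminf at_top (\<lambda>T::real. ereal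
        (\<integral>\<omega>. (LBINT s=0..stopped \<tau> T \<omega>. f (X s \<omega>) - d x) \<partial>Px x)))"

end

theory Submission
  imports Defs
begin

lemma ii_if:
  fixes \<phi> :: "real \<Rightarrow> real"
  assumes "0 \<le> (S::real)"
  shows "(LBINT s=0..S. \<phi> s) = (\<integral>s. (if 0 < s \<and> s < S then \<phi> s else 0) \<partial>lborel)"
  unfolding interval_lebesgue_integral_def set_lebesgue_integral_def einterval_def
  using assms by (simp add: indicator_def) (rule Bochner_Integration.integral_cong; simp)

lemma if_integrable:
  fixes \<phi> :: "real \<Rightarrow> real"
  assumes m: "\<phi> \<in> borel_measurable lborel" and b: "\<And>s. \<bar>\<phi> s\<bar> \<le> C" and S: "0 \<le> S"
  shows "integrable lborel (\<lambda>s. if 0 < s \<and> s < S then \<phi> s else 0)"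
    and "\<bar>\<integral>s. (if 0 < s \<and> s < S then \<phi> s else 0) \<partial>lborel\<bar> \<le> C * S"
proof -
  have C: "0 \<le> C" using b[of 0] by linarith
  have i1: "integrable lborel (\<lambda>s. C * indicator {0..S} s :: real)"
    by (intro integrable_mult_right integrable_real_indicator) (auto simp: emeasure_lborel_Icc_eq)
  have bd: "norm (if 0 < s \<and> s < S then \<phi> s else 0) \<le> norm (C * indicator {0..S} s :: real)" for s
    using b[of s] C by (auto simp: indicator_def)
  show i2: "integrable lborel (\<lambda>s. if 0 < s \<and> s < S then \<phi> s else 0)"
    by (rule Bochner_Integration.integrable_bound[OF i1]) (use m bd in auto)
  have "\<bar>\<integral>s. (if 0 < s \<and> s < S then \<phi> s else 0) \<partial>lborel\<bar> \<le> (\<integral>s. \<bar>if 0 < s \<and> s < S then \<phi> s else 0\<bar> \<partial>lborel)"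
    by (rule integral_abs_bound)
  also have "\<dots> \<le> (\<integral>s. C * indicator {0..S} s \<partial>lborel)"
    using bd C by (intro integral_mono i1 integrable_abs i2) (auto simp: indicator_def)
  also have "\<dots> = C * S" using S by simp
  finally show "\<bar>\<integral>s. (if 0 < s \<and> s < S then \<phi> s else 0) \<partial>lborel\<bar> \<le> C * S" .
qed

lemma stopped_props:
  assumes st: "stopping_time_R M F \<tau>" and w: "\<omega> \<in> space M" and T: "0 \<le> T"
  shows "0 \<le> stopped \<tau> T \<omega>" "stopped \<tau> T \<omega> \<le> T"
    "ereal (stopped \<tau> T \<omega>) = min (\<tau> \<omega>) (ereal T)"
proof -
  have "0 \<le> \<tau> \<omega>" using st w unfolding stopping_time_R_def by auto
  then show "0 \<le> stopped \<tau> T \<omega>" "stopped \<tau> T \<omega> \<le> T"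
    "ereal (stopped \<tau> T \<omega>) = min (\<tau> \<omega>) (ereal T)"
    using T unfolding stopped_def by (cases "\<tau> \<omega>"; auto simp: min_def)+
qed

lemma stopped_bst:
  assumes mk: "markov_process M F Px X" and st: "stopping_time_R M F \<tau>" and T: "0 \<le> T"
  shows "bounded_stopping_time M F (\<lambda>\<omega>. ereal (stopped \<tau> T \<omega>))"
  unfolding bounded_stopping_time_def stopping_time_R_def
proof (intro conjI ballI allI impI exI[of _ T])
  fix \<omega> assume "\<omega> \<in> space M"
  then show "0 \<le> ereal (stopped \<tau> T \<omega>)" "ereal (stopped \<tau> T \<omega>) \<le> ereal T"
    using stopped_props(1,2)[OF st _ T] by auto
next
  fix t :: real assume t: "0 \<le> t"
  have sp: "space (F t) = space M" using mk unfolding markov_process_def by auto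
  have p[measurable]: "Measurable.pred (F t) (\<lambda>\<omega>. \<tau> \<omega> \<le> ereal t)"
    using st t unfolding stopping_time_R_def by auto
  have P1: "Measurable.pred (F t) (\<lambda>\<omega>. \<tau> \<omega> \<le> ereal t \<or> T \<le> t)" by measurable
  have EQ: "(\<tau> \<omega> \<le> ereal t \<or> T \<le> t) = (ereal (stopped \<tau> T \<omega>) \<le> ereal t)"
    if w: "\<omega> \<in> space (F t)" for \<omega>
  proof -
    have "ereal (stopped \<tau> T \<omega>) = min (\<tau> \<omega>) (ereal T)"
      using stopped_props(3)[OF st _ T] w sp by blast
    then show ?thesis by (simp only: min_le_iff_disj ereal_less_eq(3))
  qed
  show "Measurable.pred (F t) (\<lambda>\<omega>. ereal (stopped \<tau> T \<omega>) \<le> ereal t)"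
    using P1 measurable_cong[of "F t" "\<lambda>\<omega>. \<tau> \<omega> \<le> ereal t \<or> T \<le> t"
        "\<lambda>\<omega>. ereal (stopped \<tau> T \<omega>) \<le> ereal t" "count_space UNIV"] EQ by blast
qed

lemma stopped_meas:
  assumes mk: "markov_process M F Px X" and st: "stopping_time_R M F \<tau>" and T: "0 \<le> T"
  shows "stopped \<tau> T \<in> borel_measurable M"
  unfolding borel_measurable_iff_le
proof
  fix a :: real
  show "{w \<in> space M. stopped \<tau> T w \<le> a} \<in> sets M"
  proof (cases "a < 0")
    case True
    have "\<forall>w\<in>space M. \<not> stopped \<tau> T w \<le> a"
      using stopped_props(1)[OF st _ T] True by force
    then have "{w \<in> space M. stopped \<tau> T w \<le> a} = {}" by blast
    then show ?thesis by (metis sets.empty_sets)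
  next
    case False
    show ?thesis
    proof (cases "T \<le> a")
      case True
      then have "{w \<in> space M. stopped \<tau> T w \<le> a} = space M"
        using stopped_props(2)[OF st _ T] by force
      then show ?thesis by simp
    next
      case False2: False
      have sp: "space (F a) = space M" "sets (F a) \<subseteq> sets M" using mk unfolding markov_process_def by auto
      have S1: "{w \<in> space (F a). \<tau> w \<le> ereal a} \<in> sets (F a)"
        using st \<open>\<not> a < 0\<close> unfolding stopping_time_R_def pred_def by auto
      have eqv: "(stopped \<tau> T w \<le> a) = (\<tau> w \<le> ereal a)" if w: "w \<in> space M" for w
      proof -
        have "(stopped \<tau> T w \<le> a) = (ereal (stopped \<tau> T w) \<le> ereal a)" by simp
        also have "\<dots> = (min (\<tau> w) (ereal T) \<le> ereal a)" using stopped_props(3)[OF st w T] by simp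
        also have "\<dots> = (\<tau> w \<le> ereal a)" using False2 by (auto simp: min_le_iff_disj)
        finally show ?thesis .
      qed
      moreover have "{w \<in> space M. stopped \<tau> T w \<le> a} = {w \<in> space (F a). \<tau> w \<le> ereal a}"
        using eqv sp(1) by auto
      ultimately show ?thesis using sp S1 by auto
    qed
  qed
qed

lemma G_meas:
  fixes g :: "'e::metric_space \<Rightarrow> real"
  assumes mk: "markov_process M F Px X" and S[measurable]: "S \<in> borel_measurable M"
    and g[measurable]: "g \<in> borel_measurable borel"
  shows "(\<lambda>\<omega>. \<integral>s. (if 0 < s \<and> s < S \<omega> then g (X s \<omega>) else 0) \<partial>lborel) \<in> borel_measurable M"
proof -
  have Xm: "(\<lambda>(t, \<omega>). X t \<omega>) \<in> (lborel \<Otimes>\<^sub>M M) \<rightarrow>\<^sub>M borel" using mk unfolding markov_process_def by auto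
  have X2[measurable]: "(\<lambda>p. X (snd p) (fst p)) \<in> (M \<Otimes>\<^sub>M lborel) \<rightarrow>\<^sub>M borel"
    using measurable_compose[OF measurable_Pair[OF measurable_snd measurable_fst] Xm] by simp
  have "case_prod (\<lambda>\<omega> s. if 0 < s \<and> s < S \<omega> then g (X s \<omega>) else 0) \<in> borel_measurable (M \<Otimes>\<^sub>M lborel)"
    unfolding case_prod_beta by measurable
  then show ?thesis by (rule lborel.borel_measurable_lebesgue_integral)
qed

lemma key:
  fixes X :: "real \<Rightarrow> 'w \<Rightarrow> 'e::metric_space" and f :: "'e \<Rightarrow> real"
  assumes mk: "markov_process M F Px X"
    and f_cont: "continuous_on UNIV f" and f_bdd: "bounded (range f)"
    and q_dynkin: "\<And>x \<tau>. bounded_stopping_time M F \<tau> \<Longrightarrow>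
       has_bochner_integral (Px x)
         (\<lambda>\<omega>. (LBINT t=0..real_of_ereal (\<tau> \<omega>). f (X t \<omega>) - integral\<^sup>L \<mu> f)
               + zero_potential Px X \<mu> f (X (real_of_ereal (\<tau> \<omega>)) \<omega>))
         (zero_potential Px X \<mu> f x)"
    and st: "stopping_time_R M F \<tau>" and T: "0 \<le> T"
  shows "(\<integral>\<omega>. (LBINT s=0..stopped \<tau> T \<omega>. f (X s \<omega>) - \<delta> * integral\<^sup>L \<mu> f) \<partial>Px x)
     = zero_potential Px X \<mu> f x + (\<integral>\<omega>. (1 - \<delta>) * integral\<^sup>L \<mu> f * stopped \<tau> T \<omega>
              - zero_potential Px X \<mu> f (X (stopped \<tau> T \<omega>) \<omega>) \<partial>Px x)"
proof -
  define c where "c = integral\<^sup>L \<mu> f"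
  define d where "d = \<delta> * c"
  define S where "S = stopped \<tau> T"
  define q where "q = zero_potential Px X \<mu> f"
  define G where "G = (\<lambda>\<omega>. LBINT s=0..S \<omega>. f (X s \<omega>) - d)"
  define A where "A = (\<lambda>\<omega>. LBINT s=0..S \<omega>. f (X s \<omega>) - c)"
  obtain Bf where Bf: "\<And>y. \<bar>f y\<bar> \<le> Bf" using f_bdd unfolding bounded_real by auto
  have fm[measurable]: "f \<in> borel_measurable borel" by (rule borel_measurable_continuous_onI[OF f_cont])
  have sx: "sets (Px x) = sets M" "prob_space (Px x)" using mk unfolding markov_process_def by auto
  have spx: "space (Px x) = space M" using sets_eq_imp_space_eq[OF sx(1)] .
  have S0: "\<And>\<omega>. \<omega> \<in> space M \<Longrightarrow> 0 \<le> S \<omega> \<and> S \<omega> \<le> T"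
    unfolding S_def using stopped_props[OF st _ T] by auto
  have Xm: "(\<lambda>(t, \<omega>). X t \<omega>) \<in> (lborel \<Otimes>\<^sub>M M) \<rightarrow>\<^sub>M borel" using mk unfolding markov_process_def by auto
  have phim: "(\<lambda>s. f (X s \<omega>) - a) \<in> borel_measurable lborel" if w: "\<omega> \<in> space M" for \<omega> a
  proof -
    have "(\<lambda>s. X s \<omega>) \<in> lborel \<rightarrow>\<^sub>M borel"
      using measurable_compose[OF measurable_Pair2'[OF w] Xm] by simp
    then show ?thesis by measurable
  qed
  have phib: "\<And>s \<omega> a. \<bar>f (X s \<omega>) - a\<bar> \<le> Bf + \<bar>a\<bar>"
    by (rule order_trans[OF abs_triangle_ineq4]) (simp add: Bf)
  have repr: "(LBINT s=0..S \<omega>. f (X s \<omega>) - a) = (\<integral>s. (if 0 < s \<and> s < S \<omega> then f (X s \<omega>) - a else 0) \<partial>lborel)"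
    if "\<omega> \<in> space M" for \<omega> a using ii_if S0[OF that] by blast
  have diffeq: "G \<omega> - A \<omega> = (1 - \<delta>) * c * S \<omega>" if w: "\<omega> \<in> space M" for \<omega>
  proof -
    have "G \<omega> - A \<omega> = (\<integral>s. (if 0 < s \<and> s < S \<omega> then f (X s \<omega>) - d else 0)
         - (if 0 < s \<and> s < S \<omega> then f (X s \<omega>) - c else 0) \<partial>lborel)"
      unfolding G_def A_def repr[OF w]
      by (rule Bochner_Integration.integral_diff[symmetric];
          rule if_integrable(1)[OF phim[OF w] phib]) (use S0[OF w] in auto)
    also have "\<dots> = (\<integral>s. (c - d) * indicator {0<..<S \<omega>} s \<partial>lborel)"
      by (rule Bochner_Integration.integral_cong) (auto simp: indicator_def)
    also have "\<dots> = (c - d) * S \<omega>" using S0[OF w] by simp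
    finally show ?thesis unfolding d_def by (simp add: algebra_simps)
  qed
  have Gm: "G \<in> borel_measurable (Px x)"
  proof -
    have Sm[measurable]: "S \<in> borel_measurable M" unfolding S_def by (rule stopped_meas[OF mk st T])
    have "(\<lambda>\<omega>. \<integral>s. (if 0 < s \<and> s < S \<omega> then (\<lambda>y. f y - d) (X s \<omega>) else 0) \<partial>lborel) \<in> borel_measurable M"
      by (rule G_meas[OF mk Sm]) measurable
    then have "G \<in> borel_measurable M"
      by (subst measurable_cong[where g="\<lambda>\<omega>. \<integral>s. (if 0 < s \<and> s < S \<omega> then f (X s \<omega>) - d else 0) \<partial>lborel"])
         (auto simp: G_def repr)
    moreover have "(Px x \<rightarrow>\<^sub>M (borel::real measure)) = (M \<rightarrow>\<^sub>M borel)"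
      by (rule measurable_cong_sets[OF sx(1) refl])
    ultimately show ?thesis by simp
  qed
  have Gi: "integrable (Px x) G"
  proof (rule finite_measure.integrable_const_bound[where B="(Bf + \<bar>d\<bar>) * T"])
    show "finite_measure (Px x)" using sx(2) by (simp add: prob_space_def)
    show "AE \<omega> in Px x. norm (G \<omega>) \<le> (Bf + \<bar>d\<bar>) * T"
    proof (rule AE_I2)
      fix \<omega> assume "\<omega> \<in> space (Px x)"
      then have w: "\<omega> \<in> space M" using spx by simp
      have "\<bar>G \<omega>\<bar> \<le> (Bf + \<bar>d\<bar>) * S \<omega>"
        unfolding G_def repr[OF w] by (rule if_integrable(2)[OF phim[OF w] phib]) (use S0[OF w] in auto)
      also have "\<dots> \<le> (Bf + \<bar>d\<bar>) * T"
        using S0[OF w] Bf[of undefined] by (intro mult_left_mono) auto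
      finally show "norm (G \<omega>) \<le> (Bf + \<bar>d\<bar>) * T" by simp
    qed
  qed (rule Gm)
  have dyn: "has_bochner_integral (Px x) (\<lambda>\<omega>. A \<omega> + q (X (S \<omega>) \<omega>)) (q x)"
    using q_dynkin[OF stopped_bst[OF mk st T], of x, unfolded real_of_ereal.simps(1)]
    unfolding A_def q_def S_def c_def .
  have "(\<integral>\<omega>. G \<omega> - (A \<omega> + q (X (S \<omega>) \<omega>)) \<partial>Px x) = integral\<^sup>L (Px x) G - q x"
    using Bochner_Integration.integral_diff[OF Gi conjunct1[OF dyn[unfolded has_bochner_integral_iff]]]
      conjunct2[OF dyn[unfolded has_bochner_integral_iff]] by simp
  moreover have "(\<integral>\<omega>. G \<omega> - (A \<omega> + q (X (S \<omega>) \<omega>)) \<partial>Px x)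
     = (\<integral>\<omega>. (1 - \<delta>) * c * S \<omega> - q (X (S \<omega>) \<omega>) \<partial>Px x)"
  proof (rule Bochner_Integration.integral_cong[OF refl])
    fix \<omega> assume "\<omega> \<in> space (Px x)"
    then have "G \<omega> - A \<omega> = (1 - \<delta>) * c * S \<omega>" using diffeq spx by simp
    then show "G \<omega> - (A \<omega> + q (X (S \<omega>) \<omega>)) = (1 - \<delta>) * c * S \<omega> - q (X (S \<omega>) \<omega>)"
      by linarith
  qed
  ultimately have "integral\<^sup>L (Px x) G = q x + (\<integral>\<omega>. (1 - \<delta>) * c * S \<omega> - q (X (S \<omega>) \<omega>) \<partial>Px x)"
    by linarith
  then show ?thesis unfolding G_def d_def c_def S_def q_def .
qed

theorem mainTheorem10:
  fixes M :: "'w measure" and F :: "real \<Rightarrow> 'w measure"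
    and Px :: "'e::metric_space \<Rightarrow> 'w measure" and X :: "real \<Rightarrow> 'w \<Rightarrow> 'e"
    and \<mu> :: "'e measure" and K :: "'e \<Rightarrow> real" and h :: "real \<Rightarrow> real"
    and f :: "'e \<Rightarrow> real" and \<delta> :: real
  assumes loc_compact: "locally_compact_space (euclidean :: 'e topology)"
    and markov: "markov_process M F Px X"
    and A1: "weak_feller Px X"
    and A2: "ergodic_bound Px X \<mu> K h"
    and A2_unique: "\<And>\<nu> K' h'. ergodic_bound Px X \<nu> K' h' \<Longrightarrow> \<nu> = \<mu>"
    and f_cont: "continuous_on UNIV f" and f_bdd: "bounded (range f)"
    and q_dynkin: "\<And>x \<tau>. bounded_stopping_time M F \<tau> \<Longrightarrow>
       has_bochner_integral (Px x)
         (\<lambda>\<omega>. (LBINT t=0..real_of_ereal (\<tau> \<omega>). f (X t \<omega>) - integral\<^sup>L \<mu> f)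
               + zero_potential Px X \<mu> f (X (real_of_ereal (\<tau> \<omega>)) \<omega>))
         (zero_potential Px X \<mu> f x)"
    and neg: "integral\<^sup>L \<mu> f < 0"
    and delta: "0 < \<delta>" "\<delta> \<le> 1"
    and gbar: "\<And>x. gamma_bar M F Px X \<mu> f \<delta> x < \<infinity>"
  shows "\<forall>x. gamma M F Px X f (\<lambda>_. \<delta> * integral\<^sup>L \<mu> f) x < \<infinity>"
proof
  fix x
  define q where "q = zero_potential Px X \<mu> f"
  have "gamma M F Px X f (\<lambda>_. \<delta> * integral\<^sup>L \<mu> f) x \<le> ereal (q x) + gamma_bar M F Px X \<mu> f \<delta> x"
    unfolding gamma_def
  proof (rule SUP_least)
    fix \<tau> assume "\<tau> \<in> {\<tau>. stopping_time_R M F \<tau>}"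
    then have st: "stopping_time_R M F \<tau>" by simp
    have "Liminf at_top (\<lambda>T::real. ereal (\<integral>\<omega>. (LBINT s=0..stopped \<tau> T \<omega>. f (X s \<omega>) - \<delta> * integral\<^sup>L \<mu> f) \<partial>Px x))
      = Liminf at_top (\<lambda>T::real. ereal (q x) + ereal (\<integral>\<omega>. (1 - \<delta>) * integral\<^sup>L \<mu> f * stopped \<tau> T \<omega>
              - zero_potential Px X \<mu> f (X (stopped \<tau> T \<omega>) \<omega>) \<partial>Px x))"
      by (rule Liminf_eq, rule eventually_mono[OF eventually_ge_at_top[of 0]])
         (simp add: q_def key[OF markov f_cont f_bdd q_dynkin st])
    also have "\<dots> = ereal (q x) + Liminf at_top (\<lambda>T::real. ereal (\<integral>\<omega>. (1 - \<delta>) * integral\<^sup>L \<mu> f * stopped \<tau> T \<omega>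
              - zero_potential Px X \<mu> f (X (stopped \<tau> T \<omega>) \<omega>) \<partial>Px x))"
      by (rule Liminf_add_ereal_left) simp_all
    also have "\<dots> \<le> ereal (q x) + gamma_bar M F Px X \<mu> f \<delta> x"
      unfolding gamma_bar_def by (intro add_left_mono) (rule SUP_upper, simp add: st)
    finally show "Liminf at_top (\<lambda>T::real. ereal (\<integral>\<omega>. (LBINT s=0..stopped \<tau> T \<omega>. f (X s \<omega>) - \<delta> * integral\<^sup>L \<mu> f) \<partial>Px x))
      \<le> ereal (q x) + gamma_bar M F Px X \<mu> f \<delta> x" .
  qed
  also have "\<dots> < \<infinity>" using gbar[of x] by (cases "gamma_bar M F Px X \<mu> f \<delta> x") auto
  finally show "gamma M F Px X f (\<lambda>_. \<delta> * integral\<^sup>L \<mu> f) x < \<infinity>" .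
qed

end
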